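(* In the setting below, if $$\sum_{t\in\mathcal K}\hat d_t^\top Z^\top f(x_t)< \sum_{t\in\mathcal K^c}\|Z^\top f(x_t)\|_2\quad\text{for all nonzero } Z\in\mathbb{R}^{m\times n},$$ then $\bar A$ is the unique global minimizer of $\min_{A\in\mathbb{R}^{n\times m}}\sum_{t=0}^{T-1}\|(\bar A-A)f(x_t)+\bar d_t\|_2$.
   Context: $f:\mathbb{R}^n\to\mathbb{R}^m$ is given, $\bar A\in\mathbb{R}^{n\times m}$, $\bar d_0,\dots,\bar d_{T-1}\in\mathbb{R}^n$, and $x_0=0_n$, $x_{t+1}=\bar A f(x_t)+\bar d_t$ for $t=0,\dots,T-1$. $\mathcal K:=\{t\in\{0,\dots,T-1\}:\bar d_t\ne 0\}$, $\mathcal K^c:=\{0,\dots,T-1\}\setminus\mathcal K$, $\hat d_t:=\bar d_t/\|\bar d_t\|_2$ for $t\in\mathcal K$. *)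

theory Defs
  imports "HOL-Analysis.Analysis"
begin

fun traj :: "(real^'n \<Rightarrow> real^'m) \<Rightarrow> real^'m^'n \<Rightarrow> (nat \<Rightarrow> real^'n) \<Rightarrow> nat \<Rightarrow> real^'n" where
  "traj f Abar d 0 = 0"
| "traj f Abar d (Suc t) = Abar *v f (traj f Abar d t) + d t"

end

theory Submission
  imports Defs
begin

lemma mv_neg_diff: "((A::real^'m^'n) - B) *v v = - ((B - A) *v v)"
  by (simp add: vec_eq_iff matrix_vector_mult_def sum_negf[symmetric] algebra_simps)

lemma dhat_bound: "(d::real^'n) \<noteq> 0 \<Longrightarrow> norm d + (d /\<^sub>R norm d) \<bullet> w \<le> norm (w + d)"
proof -
  assume "d \<noteq> 0"
  have "(d /\<^sub>R norm d) \<bullet> (w + d) \<le> norm (d /\<^sub>R norm d) * norm (w + d)"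
    by (rule norm_cauchy_schwarz)
  also have "norm (d /\<^sub>R norm d) = 1" using \<open>d \<noteq> 0\<close> by simp
  finally have "(d /\<^sub>R norm d) \<bullet> (w + d) \<le> norm (w + d)" by simp
  moreover have "(d /\<^sub>R norm d) \<bullet> (w + d) = (d /\<^sub>R norm d) \<bullet> w + norm d"
    using \<open>d \<noteq> 0\<close> by (simp add: inner_add_right field_simps power2_eq_square[symmetric] power2_norm_eq_inner)
  ultimately show ?thesis by simp
qed

theorem corollary3:
  fixes f :: "real^'n \<Rightarrow> real^'m"
    and Abar :: "real^'m^'n"
    and d :: "nat \<Rightarrow> real^'n"
    and T :: nat
  defines "x \<equiv> traj f Abar d"
    and "K \<equiv> {t. t < T \<and> d t \<noteq> 0}"
    and "Kc \<equiv> {t. t < T} - {t. t < T \<and> d t \<noteq> 0}"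
  assumes cond: "\<And>Z :: real^'n^'m. Z \<noteq> 0 \<Longrightarrow>
      (\<Sum>t\<in>K. (d t /\<^sub>R norm (d t)) \<bullet> (transpose Z *v f (x t)))
        < (\<Sum>t\<in>Kc. norm (transpose Z *v f (x t)))"
  shows "\<forall>A :: real^'m^'n.
      (\<Sum>t<T. norm ((Abar - Abar) *v f (x t) + d t)) \<le> (\<Sum>t<T. norm ((Abar - A) *v f (x t) + d t))
    \<and> ((\<Sum>t<T. norm ((Abar - A) *v f (x t) + d t)) = (\<Sum>t<T. norm ((Abar - Abar) *v f (x t) + d t)) \<longrightarrow> A = Abar)"
proof
  fix A :: "real^'m^'n"
  have split: "\<And>g :: nat \<Rightarrow> real. (\<Sum>t<T. g t) = (\<Sum>t\<in>K. g t) + (\<Sum>t\<in>Kc. g t)"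
  proof -
    fix g :: "nat \<Rightarrow> real"
    have "{..<T} = K \<union> Kc" "K \<inter> Kc = {}" "finite K" "finite Kc"
      unfolding K_def Kc_def by auto
    thus "(\<Sum>t<T. g t) = (\<Sum>t\<in>K. g t) + (\<Sum>t\<in>Kc. g t)" by (simp add: sum.union_disjoint)
  qed
  have dKc: "\<And>t. t \<in> Kc \<Longrightarrow> d t = 0" unfolding Kc_def by auto
  have g0: "(\<Sum>t<T. norm ((Abar - Abar) *v f (x t) + d t)) = (\<Sum>t\<in>K. norm (d t))"
    using split[of "\<lambda>t. norm ((Abar - Abar) *v f (x t) + d t)"] dKc by simp
  show "(\<Sum>t<T. norm ((Abar - Abar) *v f (x t) + d t)) \<le> (\<Sum>t<T. norm ((Abar - A) *v f (x t) + d t))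
    \<and> ((\<Sum>t<T. norm ((Abar - A) *v f (x t) + d t)) = (\<Sum>t<T. norm ((Abar - Abar) *v f (x t) + d t)) \<longrightarrow> A = Abar)"
  proof (cases "A = Abar")
    case True then show ?thesis by simp
  next
    case False
    let ?w = "\<lambda>t. (Abar - A) *v f (x t)"
    define Z where "Z = transpose (A - Abar)"
    have "Z \<noteq> 0"
    proof
      assume "Z = 0"
      hence "transpose Z = 0" by (simp add: transpose_def vec_eq_iff)
      hence "A - Abar = 0" unfolding Z_def by (simp add: transpose_transpose)
      with False show False by simp
    qed
    from cond[OF this] have c: "(\<Sum>t\<in>K. (d t /\<^sub>R norm (d t)) \<bullet> (- ?w t)) < (\<Sum>t\<in>Kc. norm (?w t))"
      unfolding Z_def transpose_transpose mv_neg_diff[of A Abar] by simp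
    hence c': "0 < (\<Sum>t\<in>K. (d t /\<^sub>R norm (d t)) \<bullet> ?w t) + (\<Sum>t\<in>Kc. norm (?w t))"
      by (simp add: sum_negf)
    have "(\<Sum>t\<in>K. norm (d t)) + (\<Sum>t\<in>K. (d t /\<^sub>R norm (d t)) \<bullet> ?w t) \<le> (\<Sum>t\<in>K. norm (?w t + d t))"
      unfolding sum.distrib[symmetric]
      by (rule sum_mono, rule dhat_bound, simp add: K_def)
    moreover have "(\<Sum>t<T. norm (?w t + d t)) = (\<Sum>t\<in>K. norm (?w t + d t)) + (\<Sum>t\<in>Kc. norm (?w t))"
      using split[of "\<lambda>t. norm (?w t + d t)"] dKc by simp
    ultimately have "(\<Sum>t<T. norm ((Abar - Abar) *v f (x t) + d t)) < (\<Sum>t<T. norm (?w t + d t))"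
      using g0 c' by linarith
    thus ?thesis by simp
  qed
qed

end
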